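(* Let $d\ge1$, $n\ge3$, $u\in\mathbb{C}\setminus\{0\}$. In $\mathrm{Y}_{d,n}(u)$: (1) $g_1c_{1,2}=[1+(u-1)e_1]c_{1,2}$; (2) $g_2c_{1,2}=[1+(u-1)e_2]c_{1,2}$; (3) $g_1g_2c_{1,2}=[1+(u-1)e_1+(u-1)e_{1,3}+(u-1)^2e_1e_2]c_{1,2}$; (4) $g_2g_1c_{1,2}=[1+(u-1)e_2+(u-1)e_{1,3}+(u-1)^2e_1e_2]c_{1,2}$; (5) $g_1g_2g_1c_{1,2}=[1+(u-1)(e_1+e_2+e_{1,3})+(u-1)^2(u+2)e_1e_2]c_{1,2}$.
   Context: The Yokonuma–Hecke algebra $\mathrm{Y}_{d,n}(u)$ is the unital associative $\mathbb{C}$-algebra with generators $g_1,\ldots,g_{n-1},t_1,\ldots,t_n$ and relations: $g_ig_j=g_jg_i$ for $|i-j|>1$; $g_{i+1}g_ig_{i+1}=g_ig_{i+1}g_i$; $t_it_j=t_jt_i$; $t_i^d=1$; $g_it_i=t_{i+1}g_i$; $g_it_{i+1}=t_ig_i$; $g_it_j=t_jg_i$ for $j\ne i,i+1$; $g_i^2=1+(u-1)e_i+(u-1)e_ig_i$, where $e_i=\frac1d\sum_{s=0}^{d-1}t_i^st_{i+1}^{d-s}$. Also $e_{i,j}=\frac1d\sum_{s=0}^{d-1}t_i^st_j^{d-s}$. For $w\in S_n$ with reduced expression $s_{i_1}\cdots s_{i_k}$ put $g_w=g_{i_1}\cdots g_{i_k}$; $g_{1,2}=\sum_{w\in S_3}g_w$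 and $c_{1,2}=\sum_{a,b,c=0}^{d-1}t_1^at_2^bt_3^c\,g_{1,2}$. *)

theory Defs
  imports Complex_Main
begin

text \<open>A unital associative C-algebra is modelled as a unital ring 'a together with
  a central unital ring homomorphism sc from the complex numbers (the scalars).\<close>

definition cplx_alg :: "(complex \<Rightarrow> 'a::ring_1) \<Rightarrow> bool" where
  "cplx_alg sc \<longleftrightarrow> sc 1 = 1 \<and> (\<forall>x y. sc (x + y) = sc x + sc y)
     \<and> (\<forall>x y. sc (x * y) = sc x * sc y) \<and> (\<forall>x a. sc x * a = a * sc x)"

definition yh_e :: "(complex \<Rightarrow> 'a::ring_1) \<Rightarrow> nat \<Rightarrow> (nat \<Rightarrow> 'a) \<Rightarrow> nat \<Rightarrow> nat \<Rightarrow> 'a" where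
  "yh_e sc d t i j = sc (1 / of_nat d) * (\<Sum>s<d. t i ^ s * t j ^ (d - s))"

definition yh_rels :: "(complex \<Rightarrow> 'a::ring_1) \<Rightarrow> nat \<Rightarrow> nat \<Rightarrow> complex
     \<Rightarrow> (nat \<Rightarrow> 'a) \<Rightarrow> (nat \<Rightarrow> 'a) \<Rightarrow> bool" where
  "yh_rels sc d n u g t \<longleftrightarrow>
     (\<forall>i j. 1 \<le> i \<and> i \<le> n - 1 \<and> 1 \<le> j \<and> j \<le> n - 1 \<and> (i + 1 < j \<or> j + 1 < i)
        \<longrightarrow> g i * g j = g j * g i)
   \<and> (\<forall>i. 1 \<le> i \<and> i + 1 \<le> n - 1 \<longrightarrow> g (i+1) * g i * g (i+1) = g i * g (i+1) * g i)
   \<and> (\<forall>i j. 1 \<le> i \<and> i \<le> n \<and> 1 \<le> j \<and> j \<le> n \<longrightarrow> t i * t j = t j * t i)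
   \<and> (\<forall>i. 1 \<le> i \<and> i \<le> n \<longrightarrow> t i ^ d = 1)
   \<and> (\<forall>i. 1 \<le> i \<and> i \<le> n - 1 \<longrightarrow> g i * t i = t (i+1) * g i)
   \<and> (\<forall>i. 1 \<le> i \<and> i \<le> n - 1 \<longrightarrow> g i * t (i+1) = t i * g i)
   \<and> (\<forall>i j. 1 \<le> i \<and> i \<le> n - 1 \<and> 1 \<le> j \<and> j \<le> n \<and> j \<noteq> i \<and> j \<noteq> i + 1
        \<longrightarrow> g i * t j = t j * g i)
   \<and> (\<forall>i. 1 \<le> i \<and> i \<le> n - 1 \<longrightarrow>
        g i * g i = 1 + sc (u - 1) * yh_e sc d t i (i+1)
                      + sc (u - 1) * yh_e sc d t i (i+1) * g i)"

text \<open>g_{1,2} = sum over w in S_3 of g_w (reduced words 1, s1, s2, s1s2, s2s1, s1s2s1).\<close>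
definition yh_g12 :: "(nat \<Rightarrow> 'a::ring_1) \<Rightarrow> 'a" where
  "yh_g12 g = 1 + g 1 + g 2 + g 1 * g 2 + g 2 * g 1 + g 1 * g 2 * g 1"

definition yh_c12 :: "nat \<Rightarrow> (nat \<Rightarrow> 'a::ring_1) \<Rightarrow> (nat \<Rightarrow> 'a) \<Rightarrow> 'a" where
  "yh_c12 d g t = (\<Sum>a<d. \<Sum>b<d. \<Sum>c<d. t 1 ^ a * t 2 ^ b * t 3 ^ c) * yh_g12 g"

end

theory Submission imports Defs begin

definition comm :: "'a::ring_1 \<Rightarrow> 'a \<Rightarrow> bool" where "comm a b \<longleftrightarrow> a * b = b * a"

lemma comm_mult_right: "comm a b \<Longrightarrow> comm a c \<Longrightarrow> comm a (b * c)"
  unfolding comm_def by (metis mult.assoc)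
lemma comm_mult_left: "comm a c \<Longrightarrow> comm b c \<Longrightarrow> comm (a * b) c"
  unfolding comm_def by (metis mult.assoc)
lemma comm_add_right: "comm a b \<Longrightarrow> comm a c \<Longrightarrow> comm a (b + c)"
  unfolding comm_def by (simp add: distrib_left distrib_right)
lemma comm_add_left: "comm a c \<Longrightarrow> comm b c \<Longrightarrow> comm (a + b) c"
  unfolding comm_def by (simp add: distrib_left distrib_right)
lemma comm_pow_right: "comm a b \<Longrightarrow> comm a (b ^ n)"
  unfolding comm_def by (metis power_commuting_commutes)
lemma comm_pow_left: "comm a b \<Longrightarrow> comm (a ^ n) b"
  unfolding comm_def by (metis power_commuting_commutes)
lemma comm_sum_right: "(\<And>x. x \<in> A \<Longrightarrow> comm a (f x)) \<Longrightarrow> comm a (sum f A)"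
  unfolding comm_def by (simp add: sum_distrib_left sum_distrib_right)
lemma comm_sum_left: "(\<And>x. x \<in> A \<Longrightarrow> comm (f x) a) \<Longrightarrow> comm (sum f A) a"
  unfolding comm_def by (simp add: sum_distrib_left sum_distrib_right)
lemma comm_one_left: "comm 1 a" and comm_one_right: "comm a 1" unfolding comm_def by simp_all
lemma comm_D: "comm a b \<Longrightarrow> a * b = b * a" unfolding comm_def by simp

lemma sc_props:
  assumes "cplx_alg sc"
  shows "sc 1 = 1" "sc (x + y) = sc x + sc y" "sc (x * y) = sc x * sc y" "sc x * a = a * sc x"
  using assms unfolding cplx_alg_def by blast+

lemma sc_comm: "cplx_alg sc \<Longrightarrow> comm (sc z) a" "cplx_alg sc \<Longrightarrow> comm a (sc z)"
  unfolding comm_def using sc_props(4)[of sc z a] by simp_all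

lemma sc_of_nat: assumes "cplx_alg sc" shows "sc (of_nat m) = of_nat m"
proof -
  have z: "sc 0 = 0" using sc_props(2)[OF assms, of 0 0] by simp
  show ?thesis by (induction m) (simp_all add: z sc_props[OF assms])
qed

lemma gpow: fixes g x y :: "'a::ring_1" assumes "g * x = y * g" shows "g * x ^ n = y ^ n * g"
proof (induction n)
  case 0 then show ?case by simp
next
  case (Suc n)
  have "g * x ^ Suc n = g * x * x ^ n" by (simp add: mult.assoc)
  also have "\<dots> = y * (g * x ^ n)" using assms by (simp add: mult.assoc)
  also have "\<dots> = y ^ Suc n * g" using Suc by (simp add: mult.assoc)
  finally show ?case .
qed

lemma Eshift: fixes x y :: "'a::ring_1"
  assumes xy: "x * y = y * x" and xd: "x ^ d = 1" and yd: "y ^ d = 1"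
  shows "(\<Sum>s<d. x^s * y^(d-s)) * x = (\<Sum>s<d. x^s * y^(d-s)) * y"
proof -
  define f where "f s = x^s * y^(Suc d - s)" for s
  have L: "(\<Sum>s<d. x^s * y^(d-s)) * x = (\<Sum>s<d. f (Suc s))"
    unfolding sum_distrib_right
  proof (rule sum.cong[OF refl])
    fix s assume "s \<in> {..<d}"
    have "y^(d-s) * x = x * y^(d-s)" using power_commuting_commutes[OF xy[symmetric]] by simp
    then show "x ^ s * y ^ (d - s) * x = f (Suc s)"
      unfolding f_def by (simp add: mult.assoc power_Suc2 del: power_Suc)
  qed
  have R: "(\<Sum>s<d. x^s * y^(d-s)) * y = (\<Sum>s<d. f s)"
    unfolding sum_distrib_right
  proof (rule sum.cong[OF refl])
    fix s assume "s \<in> {..<d}"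
    then have "Suc d - s = Suc (d - s)" by simp
    then show "x ^ s * y ^ (d - s) * y = f s"
      unfolding f_def by (simp add: mult.assoc power_Suc2 del: power_Suc)
  qed
  have "f 0 + (\<Sum>s<d. f (Suc s)) = (\<Sum>s<d. f s) + f d"
    using sum.lessThan_Suc_shift[of f d] sum.lessThan_Suc[of f d] by simp
  moreover have "f 0 = y" "f d = y" unfolding f_def using yd xd by (simp_all add: power_Suc2)
  ultimately have "(\<Sum>s<d. f (Suc s)) = (\<Sum>s<d. f s)" by (simp add: add.commute)
  then show ?thesis using L R by simp
qed

lemma Eshift_pow: fixes x y :: "'a::ring_1"
  assumes xy: "x * y = y * x" and xd: "x ^ d = 1" and yd: "y ^ d = 1"
  shows "(\<Sum>s<d. x^s * y^(d-s)) * x ^ r = (\<Sum>s<d. x^s * y^(d-s)) * y ^ r"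
proof (induction r)
  case 0 then show ?case by simp
next
  case (Suc r)
  let ?E = "(\<Sum>s<d. x^s * y^(d-s))"
  have c: "x * y ^ r = y ^ r * x" using power_commuting_commutes[OF xy[symmetric]] by simp
  have "?E * x ^ Suc r = ?E * x ^ r * x" by (simp add: mult.assoc power_Suc2 del: power_Suc)
  also have "\<dots> = ?E * (x * y ^ r)" using Suc by (simp add: mult.assoc c)
  also have "\<dots> = ?E * x * y ^ r" by (simp add: mult.assoc)
  also have "\<dots> = ?E * y ^ Suc r" using Eshift[OF assms] by (simp add: mult.assoc)
  finally show ?case .
qed

lemma ge_shift: fixes g x y x' y' s :: "'a::ring_1"
  assumes "g * x = x' * g" "g * y = y' * g" "s * g = g * s"
  shows "g * (s * (\<Sum>i<d. x^i * y^(d-i))) = (s * (\<Sum>i<d. x'^i * y'^(d-i))) * g"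
proof -
  have "g * (s * (\<Sum>i<d. x^i * y^(d-i))) = s * (\<Sum>i<d. g * (x^i * y^(d-i)))"
    by (simp add: mult.assoc[symmetric] assms(3) sum_distrib_left)
  also have "\<dots> = s * (\<Sum>i<d. x'^i * y'^(d-i) * g)"
    by (simp add: mult.assoc[symmetric] gpow[OF assms(1)]) (simp add: mult.assoc gpow[OF assms(2)])
  finally show ?thesis by (simp add: sum_distrib_right mult.assoc)
qed

lemma gT1: fixes g x y z :: "'a::ring_1"
  assumes "g * x = y * g" "g * y = x * g" "g * z = z * g" "x * y = y * x"
  shows "g * (\<Sum>a<d. \<Sum>b<d. \<Sum>c<d. x^a * y^b * z^c) = (\<Sum>a<d. \<Sum>b<d. \<Sum>c<d. x^a * y^b * z^c) * g"
proof -
  have "g * (\<Sum>a<d. \<Sum>b<d. \<Sum>c<d. x^a * y^b * z^c) = (\<Sum>a<d. \<Sum>b<d. \<Sum>c<d. y^a * x^b * z^c * g)"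
    by (simp add: sum_distrib_left mult.assoc[symmetric] gpow[OF assms(1)])
       (simp add: mult.assoc gpow[OF assms(2)] gpow[OF assms(3)])
  also have "\<dots> = (\<Sum>a<d. \<Sum>b<d. \<Sum>c<d. x^b * y^a * z^c * g)"
    using comm_D[OF comm_pow_left[OF comm_pow_right[of y x]]] assms(4) unfolding comm_def by simp
  also have "\<dots> = (\<Sum>b<d. \<Sum>a<d. \<Sum>c<d. x^b * y^a * z^c * g)" by (rule sum.swap)
  finally show ?thesis by (simp add: sum_distrib_right)
qed

lemma gT2: fixes g x y z :: "'a::ring_1"
  assumes "g * x = x * g" "g * y = z * g" "g * z = y * g" "y * z = z * y"
  shows "g * (\<Sum>a<d. \<Sum>b<d. \<Sum>c<d. x^a * y^b * z^c) = (\<Sum>a<d. \<Sum>b<d. \<Sum>c<d. x^a * y^b * z^c) * g"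
proof -
  have "g * (\<Sum>a<d. \<Sum>b<d. \<Sum>c<d. x^a * y^b * z^c) = (\<Sum>a<d. \<Sum>b<d. \<Sum>c<d. x^a * (z^b * y^c) * g)"
    by (simp add: sum_distrib_left mult.assoc[symmetric] gpow[OF assms(1)])
       (simp add: mult.assoc gpow[OF assms(2)] gpow[OF assms(3)])
  also have "\<dots> = (\<Sum>a<d. \<Sum>b<d. \<Sum>c<d. x^a * (y^c * z^b) * g)"
    using comm_D[OF comm_pow_left[OF comm_pow_right[of z y]]] assms(4) unfolding comm_def by simp
  also have "\<dots> = (\<Sum>a<d. \<Sum>c<d. \<Sum>b<d. x^a * (y^c * z^b) * g)" by (rule sum.cong[OF refl], rule sum.swap)
  finally show ?thesis by (simp add: sum_distrib_right mult.assoc)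
qed

lemmas comm_rules = comm_mult_right comm_mult_left comm_add_right comm_add_left
  comm_pow_right comm_pow_left comm_sum_right comm_sum_left comm_one_left comm_one_right

lemma assoc_rule: "(a::'a::ring_1) * b = c \<Longrightarrow> a * (b * X) = c * X"
  by (simp add: mult.assoc[symmetric])

lemma cent_prod: "(s::'a::ring_1) * X = X * s \<Longrightarrow> s * X * (s * Y) = s * s * (X * Y)"
  by (metis mult.assoc)

declare One_nat_def [simp del]

theorem lemma6:
  fixes sc :: "complex \<Rightarrow> 'a::ring_1" and g t :: "nat \<Rightarrow> 'a"
    and d n :: nat and u :: complex
  assumes "d \<ge> 1" and "n \<ge> 3" and "u \<noteq> 0"
    and "cplx_alg sc" and "yh_rels sc d n u g t"
  defines "e1 \<equiv> yh_e sc d t 1 2" and "e2 \<equiv> yh_e sc d t 2 3"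
    and "e13 \<equiv> yh_e sc d t 1 3" and "c \<equiv> yh_c12 d g t" and "v \<equiv> sc (u - 1)"
  shows "g 1 * c = (1 + v * e1) * c \<and>
         g 2 * c = (1 + v * e2) * c \<and>
         g 1 * g 2 * c = (1 + v * e1 + v * e13 + v ^ 2 * e1 * e2) * c \<and>
         g 2 * g 1 * c = (1 + v * e2 + v * e13 + v ^ 2 * e1 * e2) * c \<and>
         g 1 * g 2 * g 1 * c = (1 + v * (e1 + e2 + e13) + v ^ 2 * sc (u + 2) * e1 * e2) * c"
proof -
  note scp = sc_props[OF assms(4)]
  note scc = sc_comm[OF assms(4)]
  have R2: "\<forall>i. 1 \<le> i \<and> i + 1 \<le> n - 1 \<longrightarrow> g (i+1) * g i * g (i+1) = g i * g (i+1) * g i"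
    and R3: "\<forall>i j. 1 \<le> i \<and> i \<le> n \<and> 1 \<le> j \<and> j \<le> n \<longrightarrow> t i * t j = t j * t i"
    and R4: "\<forall>i. 1 \<le> i \<and> i \<le> n \<longrightarrow> t i ^ d = 1"
    and R5: "\<forall>i. 1 \<le> i \<and> i \<le> n - 1 \<longrightarrow> g i * t i = t (i+1) * g i"
    and R6: "\<forall>i. 1 \<le> i \<and> i \<le> n - 1 \<longrightarrow> g i * t (i+1) = t i * g i"
    and R7: "\<forall>i j. 1 \<le> i \<and> i \<le> n - 1 \<and> 1 \<le> j \<and> j \<le> n \<and> j \<noteq> i \<and> j \<noteq> i + 1
        \<longrightarrow> g i * t j = t j * g i"
    and R8: "\<forall>i. 1 \<le> i \<and> i \<le> n - 1 \<longrightarrow>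
        g i * g i = 1 + sc (u - 1) * yh_e sc d t i (i+1)
                      + sc (u - 1) * yh_e sc d t i (i+1) * g i"
    using assms(5) unfolding yh_rels_def by blast+
  have n3: "n \<ge> 3" by fact
  have braid: "g 2 * g 1 * g 2 = g 1 * g 2 * g 1" using spec[OF R2, of 1] n3 by (simp add: numeral_2_eq_2 numeral_3_eq_3)
  have tc: "comm (t i) (t j)" if "i \<in> {1,2,3}" "j \<in> {1,2,3}" for i j
  proof -
    have "1 \<le> i \<and> i \<le> n \<and> 1 \<le> j \<and> j \<le> n" using that n3 by auto
    then show ?thesis using R3 unfolding comm_def by blast
  qed
  have td: "t i ^ d = 1" if "i \<in> {1,2,3}" for i
  proof -
    have "1 \<le> i \<and> i \<le> n" using that n3 by auto
    then show ?thesis using R4 by blast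
  qed
  have g1t1: "g 1 * t 1 = t 2 * g 1" using spec[OF R5, of 1] n3 by (simp add: numeral_2_eq_2 numeral_3_eq_3)
  have g1t2: "g 1 * t 2 = t 1 * g 1" using spec[OF R6, of 1] n3 by (simp add: numeral_2_eq_2 numeral_3_eq_3)
  have g1t3: "g 1 * t 3 = t 3 * g 1" using spec[OF R7, of 1] n3 by (force simp add: numeral_2_eq_2 numeral_3_eq_3)
  have g2t2: "g 2 * t 2 = t 3 * g 2" using spec[OF R5, of 2] n3 by (simp add: numeral_2_eq_2 numeral_3_eq_3)
  have g2t3: "g 2 * t 3 = t 2 * g 2" using spec[OF R6, of 2] n3 by (simp add: numeral_2_eq_2 numeral_3_eq_3)
  have g2t1: "g 2 * t 1 = t 1 * g 2" using spec[OF R7, of 2] n3 by (force simp add: numeral_2_eq_2 numeral_3_eq_3)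
  have sq1: "g 1 * g 1 = 1 + v * e1 + v * e1 * g 1" using spec[OF R8, of 1] n3
    by (simp add: e1_def v_def numeral_2_eq_2)
  have sq2: "g 2 * g 2 = 1 + v * e2 + v * e2 * g 2" using spec[OF R8, of 2] n3
    by (simp add: e2_def v_def numeral_2_eq_2 numeral_3_eq_3)
  have sq1': "g 1 * (g 1 * X) = X + v * (e1 * X) + v * (e1 * (g 1 * X))" for X
  proof -
    have "g 1 * (g 1 * X) = (g 1 * g 1) * X" by (simp add: mult.assoc)
    then show ?thesis unfolding sq1 by (simp add: distrib_right mult.assoc)
  qed
  have sq2': "g 2 * (g 2 * X) = X + v * (e2 * X) + v * (e2 * (g 2 * X))" for X
  proof -
    have "g 2 * (g 2 * X) = (g 2 * g 2) * X" by (simp add: mult.assoc)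
    then show ?thesis unfolding sq2 by (simp add: distrib_right mult.assoc)
  qed
  have braid': "g 2 * (g 1 * (g 2 * X)) = g 1 * (g 2 * (g 1 * X))" for X
  proof -
    have "g 2 * (g 1 * (g 2 * X)) = (g 2 * g 1 * g 2) * X" by (simp only: mult.assoc)
    also have "\<dots> = (g 1 * g 2 * g 1) * X" by (simp only: braid)
    also have "\<dots> = g 1 * (g 2 * (g 1 * X))" by (simp only: mult.assoc)
    finally show ?thesis .
  qed
  have braid0: "g 2 * (g 1 * g 2) = g 1 * (g 2 * g 1)" using braid by (simp only: mult.assoc)
  have vc: "a * v = v * a" for a unfolding v_def using scp(4)[of "u - 1" a] by (rule sym)
  have vc': "a * (v * X) = v * (a * X)" for a X
  proof -
    have "a * (v * X) = (a * v) * X" by (rule mult.assoc[symmetric])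
    also have "\<dots> = (v * a) * X" by (simp only: vc)
    also have "\<dots> = v * (a * X)" by (rule mult.assoc)
    finally show ?thesis .
  qed
  define k where "k = sc (1 / of_nat d)"
  define E12 where "E12 = (\<Sum>s<d. t 1 ^ s * t 2 ^ (d - s))"
  define E23 where "E23 = (\<Sum>s<d. t 2 ^ s * t 3 ^ (d - s))"
  define E13 where "E13 = (\<Sum>s<d. t 1 ^ s * t 3 ^ (d - s))"
  have e1E: "e1 = k * E12" and e2E: "e2 = k * E23" and e13E: "e13 = k * E13"
    unfolding e1_def e2_def e13_def yh_e_def k_def E12_def E23_def E13_def by simp_all
  have kc: "k * X = X * k" for X unfolding k_def using scp(4) by simp
  define T where "T = (\<Sum>a<d. \<Sum>b<d. \<Sum>c<d. t 1 ^ a * t 2 ^ b * t 3 ^ c)"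
  define G where "G = yh_g12 g"
  have cTG: "c = T * G" unfolding c_def yh_c12_def T_def G_def by simp
  have g2e1: "g 2 * e1 = e13 * g 2" unfolding e1E e13E E12_def E13_def
    by (rule ge_shift[OF g2t1 g2t2 kc])
  have g1e13: "g 1 * e13 = e2 * g 1" unfolding e2E e13E E23_def E13_def
    by (rule ge_shift[OF g1t1 g1t3 kc])
  have g1e2: "g 1 * e2 = e13 * g 1" unfolding e2E e13E E23_def E13_def
    by (rule ge_shift[OF g1t2 g1t3 kc])
  have g12e1: "g 1 * (g 2 * e1) = e2 * (g 1 * g 2)"
    by (simp add: g2e1 mult.assoc[symmetric] g1e13)
  have g12e1': "g 1 * (g 2 * (e1 * X)) = e2 * (g 1 * (g 2 * X))" for X
    using g12e1 by (simp add: mult.assoc[symmetric])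
  have g1e2': "g 1 * (e2 * X) = e13 * (g 1 * X)" for X using g1e2 by (simp add: mult.assoc[symmetric])
  have g2e1': "g 2 * (e1 * X) = e13 * (g 2 * X)" for X using g2e1 by (simp add: mult.assoc[symmetric])
  have gG1: "g 1 * G = (1 + v * e1) * G"
    unfolding G_def yh_g12_def by (simp add: algebra_simps sq1 sq1')
  have gG2: "g 2 * G = (1 + v * e2) * G"
    unfolding G_def yh_g12_def
    by (simp add: algebra_simps sq1 sq1' sq2 sq2' braid0 braid' vc'[of "g 1"] vc'[of "g 2"] g12e1 g12e1' vc[of "g 1"] vc[of "g 2"])
  have gT1': "g 1 * T = T * g 1" unfolding T_def
    by (rule gT1[OF g1t1 g1t2 g1t3 comm_D[OF tc]]) auto
  have gT2': "g 2 * T = T * g 2" unfolding T_def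
    by (rule gT2[OF g2t1 g2t2 g2t3 comm_D[OF tc]]) auto
  have kcomm: "comm k X" for X unfolding k_def by (rule scc)
  have vcomm: "comm v X" for X unfolding v_def by (rule scc)
  have Ec: "comm E12 T" "comm E23 T" "comm E13 T" "comm E12 E13" "comm E12 E23" "comm E23 E13"
    unfolding E12_def E23_def E13_def T_def
    by (auto intro!: comm_rules tc)
  have eTc: "comm e1 T" "comm e2 T" "comm e13 T" unfolding e1E e2E e13E
    using Ec by (auto intro!: comm_rules kcomm)
  have lift: "g * (T * G) = A * (T * G)" if "g * T = T * g" "g * G = A * G" "comm A T" for g A
    using that unfolding comm_def by (metis mult.assoc)
  have A1: "comm (1 + v * e1) T" "comm (1 + v * e2) T" using eTc
    by (auto intro!: comm_rules vcomm)
  have gc1: "g 1 * c = (1 + v * e1) * c" unfolding cTG by (rule lift[OF gT1' gG1 A1(1)])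
  have gc2: "g 2 * c = (1 + v * e2) * c" unfolding cTG by (rule lift[OF gT2' gG2 A1(2)])
  have gc1': "g 1 * c = c + v * (e1 * c)" using gc1 by (simp add: algebra_simps)
  have gc2': "g 2 * c = c + v * (e2 * c)" using gc2 by (simp add: algebra_simps)
  have t12: "t 1 * t 2 = t 2 * t 1" and t23: "t 2 * t 3 = t 3 * t 2"
    using comm_D[OF tc[of 1 2]] comm_D[OF tc[of 2 3]] by simp_all
  have td1: "t 1 ^ d = 1" and td2: "t 2 ^ d = 1" and td3: "t 3 ^ d = 1" using td by simp_all
  have EE1: "E12 * E13 = E12 * E23"
    unfolding E13_def E23_def
    apply (simp add: sum_distrib_left mult.assoc[symmetric])
    apply (subst (2) E12_def)
    apply (subst (1) E12_def)
    apply (simp add: Eshift_pow[OF t12 td1 td2])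
    done
  have c0: "comm E23 (t 1)" unfolding E23_def
    by (rule comm_sum_left, rule comm_mult_left; rule comm_pow_left, rule tc) simp_all
  have EE2: "E23 * E13 = E23 * E12"
    unfolding E13_def E12_def sum_distrib_left
  proof (rule sum.cong[OF refl])
    fix r assume "r \<in> {..<d}"
    have c1: "comm E23 (t 1 ^ r)" by (rule comm_pow_right[OF c0])
    have "E23 * (t 1 ^ r * t 3 ^ (d - r)) = t 1 ^ r * (E23 * t 3 ^ (d - r))"
      using comm_D[OF c1] by (simp add: mult.assoc[symmetric])
    also have "\<dots> = t 1 ^ r * (E23 * t 2 ^ (d - r))"
      unfolding E23_def using Eshift_pow[OF t23 td2 td3] by simp
    also have "\<dots> = E23 * (t 1 ^ r * t 2 ^ (d - r))"
      using comm_D[OF c1] by (simp add: mult.assoc[symmetric])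
    finally show "E23 * (t 1 ^ r * t 3 ^ (d - r)) = E23 * (t 1 ^ r * t 2 ^ (d - r))" .
  qed
  have EE3: "E23 * E23 = of_nat d * E23"
  proof -
    have "E23 * E23 = (\<Sum>s<d. E23 * (t 2 ^ s * t 3 ^ (d - s)))"
      by (subst (2) E23_def) (simp add: sum_distrib_left)
    also have "\<dots> = (\<Sum>s<d. E23)"
    proof (rule sum.cong[OF refl])
      fix s assume s: "s \<in> {..<d}"
      have "E23 * (t 2 ^ s * t 3 ^ (d - s)) = E23 * t 2 ^ s * t 3 ^ (d - s)" by (simp add: mult.assoc)
      also have "\<dots> = E23 * t 3 ^ s * t 3 ^ (d - s)"
        unfolding E23_def using Eshift_pow[OF t23 td2 td3] by simp
      also have "\<dots> = E23 * t 3 ^ d" using s by (simp add: mult.assoc power_add[symmetric])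
      finally show "E23 * (t 2 ^ s * t 3 ^ (d - s)) = E23" using td3 by simp
    qed
    also have "\<dots> = of_nat d * E23" by simp
    finally show ?thesis .
  qed
  have kd: "k * of_nat d = 1"
  proof -
    have "k * of_nat d = sc (1 / of_nat d) * sc (of_nat d)" unfolding k_def sc_of_nat[OF assms(4)] ..
    also have "\<dots> = sc 1" using assms(1) by (simp add: scp(3)[symmetric])
    finally show ?thesis using scp(1) by simp
  qed
  have kcomm2: "comm X k" for X unfolding k_def by (rule scc)
  have ecomm: "comm e1 e13" "comm e2 e13" "comm e1 e2" unfolding e1E e2E e13E
    using Ec by (auto intro!: comm_rules kcomm kcomm2)
  have e1e13: "e1 * e13 = e1 * e2" unfolding e1E e2E e13E by (simp only: cent_prod[OF kc] EE1)
  have e13e1: "e13 * e1 = e1 * e2" using comm_D[OF ecomm(1)] e1e13 by simp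
  have e2e1: "e2 * e1 = e1 * e2" using comm_D[OF ecomm(3)] by simp
  have e2e13: "e2 * e13 = e1 * e2" unfolding e2e1[symmetric] unfolding e1E e2E e13E
    by (simp only: cent_prod[OF kc] EE2)
  have e13e2: "e13 * e2 = e1 * e2" using comm_D[OF ecomm(2)] e2e13 by simp
  have e2e2: "e2 * e2 = e2"
  proof -
    have "e2 * e2 = k * k * (of_nat d * E23)" unfolding e2E by (simp only: cent_prod[OF kc] EE3)
    also have "\<dots> = k * (k * of_nat d) * E23" by (simp add: mult.assoc)
    finally show ?thesis using kd e2E by simp
  qed
  note vcs = vc'[of "g 1"] vc'[of "g 2"] vc'[of e1] vc'[of e2] vc'[of e13]
  have gg12: "g 1 * (g 2 * c) = (1 + v * e1 + v * e13 + v ^ 2 * e1 * e2) * c"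
  proof -
    have "g 1 * (g 2 * c) = g 1 * (c + v * (e2 * c))" by (simp only: gc2')
    also have "\<dots> = g 1 * c + v * (e13 * (g 1 * c))" by (simp only: distrib_left vcs g1e2')
    also have "\<dots> = c + v * (e1 * c) + v * (e13 * c) + v * (v * (e1 * (e2 * c)))"
      by (simp only: gc1' distrib_left vcs assoc_rule[OF e13e1] mult.assoc add_ac)
    also have "\<dots> = (1 + v * e1 + v * e13 + v ^ 2 * e1 * e2) * c"
      by (simp only: distrib_right mult.assoc power2_eq_square mult_1_left add_ac)
    finally show ?thesis .
  qed
  have gg21: "g 2 * (g 1 * c) = (1 + v * e2 + v * e13 + v ^ 2 * e1 * e2) * c"
  proof -
    have "g 2 * (g 1 * c) = g 2 * (c + v * (e1 * c))" by (simp only: gc1')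
    also have "\<dots> = g 2 * c + v * (e13 * (g 2 * c))" by (simp only: distrib_left vcs g2e1')
    also have "\<dots> = c + v * (e2 * c) + v * (e13 * c) + v * (v * (e1 * (e2 * c)))"
      by (simp only: gc2' distrib_left vcs assoc_rule[OF e13e2] mult.assoc add_ac)
    also have "\<dots> = (1 + v * e2 + v * e13 + v ^ 2 * e1 * e2) * c"
      by (simp only: distrib_right mult.assoc power2_eq_square mult_1_left add_ac)
    finally show ?thesis .
  qed
  have su2: "sc (u + 2) = v + 1 + 1 + 1"
  proof -
    have "u + 2 = (u - 1) + 1 + 1 + 1" by simp
    then show ?thesis unfolding v_def by (simp only: scp(1,2))
  qed
  have stepA: "g 1 * (g 2 * (g 1 * c)) = g 1 * (g 2 * c) + v * (e2 * (g 1 * (g 2 * c)))"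
    by (simp only: gc1' distrib_left vcs g12e1')
  have stepB: "W + v * (e2 * W) = (1 + v * (e1 + e2 + e13) + v ^ 2 * sc (u + 2) * e1 * e2) * c"
    if W: "W = (1 + v * e1 + v * e13 + v ^ 2 * e1 * e2) * c" for W
  proof -
    have hW: "W = c + v * (e1 * c) + v * (e13 * c) + v * (v * (e1 * (e2 * c)))"
      unfolding W by (simp only: distrib_right mult.assoc power2_eq_square mult_1_left)
    have hE: "e2 * W = e2 * c + v * (e1 * (e2 * c)) + v * (e1 * (e2 * c)) + v * (v * (e1 * (e2 * c)))"
      unfolding hW by (simp only: distrib_left vcs assoc_rule[OF e2e1] assoc_rule[OF e2e13]
         assoc_rule[OF e2e2] mult.assoc)
    have hT: "(1 + v * (e1 + e2 + e13) + v ^ 2 * sc (u + 2) * e1 * e2) * c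
       = c + v * (e1 * c) + v * (e2 * c) + v * (e13 * c) + v * (v * (v * (e1 * (e2 * c))))
         + v * (v * (e1 * (e2 * c))) + v * (v * (e1 * (e2 * c))) + v * (v * (e1 * (e2 * c)))"
      unfolding su2 by (simp only: distrib_right distrib_left mult.assoc power2_eq_square mult_1_left mult_1_right add_ac)
    have "W + v * (e2 * W) = W + v * (e2 * c + v * (e1 * (e2 * c)) + v * (e1 * (e2 * c)) + v * (v * (e1 * (e2 * c))))"
      by (simp only: hE)
    also have "\<dots> = c + v * (e1 * c) + v * (e13 * c) + v * (v * (e1 * (e2 * c))) +
       v * (e2 * c + v * (e1 * (e2 * c)) + v * (e1 * (e2 * c)) + v * (v * (e1 * (e2 * c))))"
      by (simp only: hW)
    also have "\<dots> = c + v * (e1 * c) + v * (e2 * c) + v * (e13 * c) + v * (v * (v * (e1 * (e2 * c))))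
         + v * (v * (e1 * (e2 * c))) + v * (v * (e1 * (e2 * c))) + v * (v * (e1 * (e2 * c)))"
      by (simp only: distrib_left add_ac)
    finally show ?thesis using hT by simp
  qed
  have gg121: "g 1 * (g 2 * (g 1 * c)) = (1 + v * (e1 + e2 + e13) + v ^ 2 * sc (u + 2) * e1 * e2) * c"
    unfolding stepA by (rule stepB[OF gg12])
  show ?thesis using gc1 gc2 gg12 gg21 gg121 by (simp add: mult.assoc)
qed

end
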